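(* Let $\varepsilon>0$ and grant (NormEq) with constant $C'$ and (H) with parameters $r$ and $\alpha$. Then every $f\in F$ with $\|f-f^*\|_{L_2}\le r$ satisfies $\|f-f^*\|_{L_2}^2\le\frac4\alpha P\mathcal L_f$.
   Context: Setting: $F$ is a convex class of measurable functions $\mathcal X\to\mathbb R$, $\mathcal Y=\mathbb R$, $(X,Y)\sim P$, $X\sim\mu$, $\|g\|_{L_p}=(\mathbb E|g(X)|^p)^{1/p}$. For $\delta>0$, $\rho_H(t)=t^2/2$ if $|t|\le\delta$ and $\rho_H(t)=\delta|t|-\delta^2/2$ otherwise; the Huber loss is $\ell_f(x,y)=\rho_H(y-f(x))$. $f^*$ is the (unique) minimizer of $f\mapsto P\ell_f$ over $F$, $\mathcal L_f=\ell_f-\ell_{f^*}$, $P\mathcal L_f=\mathbb E\mathcal L_f(X,Y)$. (NormEq): there is $C'>0$ such that $\|f-f^*\|_{L_{2+\varepsilon}}\le C'\|f-f^*\|_{L_2}$ for all $f\in F$. (H): letting $F_{Y|X=x}$ be the conditional c.d.f. of $Y$ given $X=x$, there exist $\alpha>0$, $r>0$ such that for all $x\in\mathcal X$ and $z\in\mathbb R$ with $|z-f^*(x)|\le(\sqrt2C')^{(2+\varepsilon)/\varepsilon}r$, $F_{Y|X=x}(z+\delta)-F_{Y|X=x}(z-\delta)\ge\alpha$. *)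

theory Defs
  imports "HOL-Probability.Probability"
begin

definition huber :: "real \<Rightarrow> real \<Rightarrow> real" where
  "huber \<delta> t = (if \<bar>t\<bar> \<le> \<delta> then t\<^sup>2 / 2 else \<delta> * \<bar>t\<bar> - \<delta>\<^sup>2 / 2)"

definition huber_loss :: "real \<Rightarrow> ('x \<Rightarrow> real) \<Rightarrow> 'x \<times> real \<Rightarrow> real" where
  "huber_loss \<delta> f = (\<lambda>(x, y). huber \<delta> (y - f x))"

text \<open>Joint law P of (X,Y): X has law mu, and the conditional law of Y given X = x is K x.\<close>
definition joint_law :: "'x measure \<Rightarrow> ('x \<Rightarrow> real measure) \<Rightarrow> ('x \<times> real) measure" where
  "joint_law \<mu> K = \<mu> \<bind> (\<lambda>x. distr (K x) (\<mu> \<Otimes>\<^sub>M borel) (\<lambda>y. (x, y)))"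

definition cond_cdf :: "('x \<Rightarrow> real measure) \<Rightarrow> 'x \<Rightarrow> real \<Rightarrow> real" where
  "cond_cdf K x z = measure (K x) {..z}"

definition memLp :: "'x measure \<Rightarrow> real \<Rightarrow> ('x \<Rightarrow> real) \<Rightarrow> bool" where
  "memLp \<mu> p g \<longleftrightarrow> g \<in> borel_measurable \<mu> \<and> integrable \<mu> (\<lambda>x. \<bar>g x\<bar> powr p)"

text \<open>L_p norm (meaningful for g in L_p).\<close>
definition Lnorm :: "'x measure \<Rightarrow> real \<Rightarrow> ('x \<Rightarrow> real) \<Rightarrow> real" where
  "Lnorm \<mu> p g = (\<integral>x. \<bar>g x\<bar> powr p \<partial>\<mu>) powr (1 / p)"

definition convex_class :: "('x \<Rightarrow> real) set \<Rightarrow> bool" where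
  "convex_class F \<longleftrightarrow> (\<forall>f\<in>F. \<forall>g\<in>F. \<forall>t::real. 0 \<le> t \<and> t \<le> 1 \<longrightarrow>
      (\<lambda>x. t * f x + (1 - t) * g x) \<in> F)"

end

theory Submission
  imports Defs
begin

definition cl :: "real \<Rightarrow> real \<Rightarrow> real" where "cl \<delta> w = max (-\<delta>) (min \<delta> w)"

lemma huber_M: "\<bar>w\<bar> \<le> \<delta> \<Longrightarrow> huber \<delta> w = w^2/2 \<and> cl \<delta> w = w" by (auto simp: huber_def cl_def)
lemma huber_H: "w > \<delta> \<Longrightarrow> \<delta> > 0 \<Longrightarrow> huber \<delta> w = \<delta>*w - \<delta>^2/2 \<and> cl \<delta> w = \<delta>" by (auto simp: huber_def cl_def)
lemma huber_L: "w < -\<delta> \<Longrightarrow> \<delta> > 0 \<Longrightarrow> huber \<delta> w = - \<delta> * w - \<delta>^2 / 2 \<and> cl \<delta> w = -\<delta>" by (auto simp: huber_def cl_def)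

lemma huber_conv: assumes d: "\<delta> > 0" shows "huber \<delta> w + (v - w) * cl \<delta> w \<le> huber \<delta> v"
proof -
  have gen: "\<And>X Y :: real. 0 \<le> Y \<Longrightarrow> 2*X = Y \<Longrightarrow> 0 \<le> X" by simp
  have "w < -\<delta> \<Longrightarrow> v < -\<delta> \<Longrightarrow> ?thesis"
  proof -
  assume w: "w < -\<delta>" and v: "v < -\<delta>"
  have h: "huber \<delta> w = - \<delta> * w - \<delta>^2 / 2" "cl \<delta> w = -\<delta>" "huber \<delta> v = - \<delta> * v - \<delta>^2 / 2" using huber_L[OF w d] huber_L[OF v d] by auto
  have q: "2 * (huber \<delta> v - huber \<delta> w - (v - w) * cl \<delta> w) = (0::real)" unfolding h power2_eq_square by (simp add: field_simps)
  have p: "0 \<le> (0::real)" using w v d by simp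
  from gen[OF p q] show ?thesis by simp
  qed
  moreover have "w < -\<delta> \<Longrightarrow> \<bar>v\<bar> \<le> \<delta> \<Longrightarrow> ?thesis"
  proof -
  assume w: "w < -\<delta>" and v: "\<bar>v\<bar> \<le> \<delta>"
  have h: "huber \<delta> w = - \<delta> * w - \<delta>^2 / 2" "cl \<delta> w = -\<delta>" "huber \<delta> v = v^2/2" using huber_L[OF w d] huber_M[OF v] by auto
  have q: "2 * (huber \<delta> v - huber \<delta> w - (v - w) * cl \<delta> w) = (v+\<delta>)^2" unfolding h power2_eq_square by (simp add: field_simps)
  have p: "0 \<le> (v+\<delta>)^2" using w v d by simp
  from gen[OF p q] show ?thesis by simp
  qed
  moreover have "w < -\<delta> \<Longrightarrow> v > \<delta> \<Longrightarrow> ?thesis"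
  proof -
  assume w: "w < -\<delta>" and v: "v > \<delta>"
  have h: "huber \<delta> w = - \<delta> * w - \<delta>^2 / 2" "cl \<delta> w = -\<delta>" "huber \<delta> v = \<delta> * v - \<delta>^2 / 2" using huber_L[OF w d] huber_H[OF v d] by auto
  have q: "2 * (huber \<delta> v - huber \<delta> w - (v - w) * cl \<delta> w) = 4 * \<delta> * v" unfolding h power2_eq_square by (simp add: field_simps)
  have p: "0 \<le> 4 * \<delta> * v" using w v d by simp
  from gen[OF p q] show ?thesis by simp
  qed
  moreover have "\<bar>w\<bar> \<le> \<delta> \<Longrightarrow> v < -\<delta> \<Longrightarrow> ?thesis"
  proof -
  assume w: "\<bar>w\<bar> \<le> \<delta>" and v: "v < -\<delta>"
  have h: "huber \<delta> w = w^2/2" "cl \<delta> w = w" "huber \<delta> v = - \<delta> * v - \<delta>^2 / 2" using huber_M[OF w] huber_L[OF v d] by auto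
  have q: "2 * (huber \<delta> v - huber \<delta> w - (v - w) * cl \<delta> w) = (\<delta>+w)*(-2 * v + w - \<delta>)" unfolding h power2_eq_square by (simp add: field_simps)
  have p: "0 \<le> (\<delta>+w)*(-2 * v + w - \<delta>)" using w v d by (intro mult_nonneg_nonneg) auto
  from gen[OF p q] show ?thesis by simp
  qed
  moreover have "\<bar>w\<bar> \<le> \<delta> \<Longrightarrow> \<bar>v\<bar> \<le> \<delta> \<Longrightarrow> ?thesis"
  proof -
  assume w: "\<bar>w\<bar> \<le> \<delta>" and v: "\<bar>v\<bar> \<le> \<delta>"
  have h: "huber \<delta> w = w^2/2" "cl \<delta> w = w" "huber \<delta> v = v^2/2" using huber_M[OF w] huber_M[OF v] by auto
  have q: "2 * (huber \<delta> v - huber \<delta> w - (v - w) * cl \<delta> w) = (v-w)^2" unfolding h power2_eq_square by (simp add: field_simps)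
  have p: "0 \<le> (v-w)^2" using w v d by simp
  from gen[OF p q] show ?thesis by simp
  qed
  moreover have "\<bar>w\<bar> \<le> \<delta> \<Longrightarrow> v > \<delta> \<Longrightarrow> ?thesis"
  proof -
  assume w: "\<bar>w\<bar> \<le> \<delta>" and v: "v > \<delta>"
  have h: "huber \<delta> w = w^2/2" "cl \<delta> w = w" "huber \<delta> v = \<delta> * v - \<delta>^2 / 2" using huber_M[OF w] huber_H[OF v d] by auto
  have q: "2 * (huber \<delta> v - huber \<delta> w - (v - w) * cl \<delta> w) = (\<delta>-w)*(2 * v - w - \<delta>)" unfolding h power2_eq_square by (simp add: field_simps)
  have p: "0 \<le> (\<delta>-w)*(2 * v - w - \<delta>)" using w v d by (intro mult_nonneg_nonneg) auto
  from gen[OF p q] show ?thesis by simp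
  qed
  moreover have "w > \<delta> \<Longrightarrow> v < -\<delta> \<Longrightarrow> ?thesis"
  proof -
  assume w: "w > \<delta>" and v: "v < -\<delta>"
  have h: "huber \<delta> w = \<delta> * w - \<delta>^2 / 2" "cl \<delta> w = \<delta>" "huber \<delta> v = - \<delta> * v - \<delta>^2 / 2" using huber_H[OF w d] huber_L[OF v d] by auto
  have q: "2 * (huber \<delta> v - huber \<delta> w - (v - w) * cl \<delta> w) = 4 * \<delta> * (-v)" unfolding h power2_eq_square by (simp add: field_simps)
  have p: "0 \<le> 4 * \<delta> * (-v)" using w v d by (simp add: mult_le_0_iff)
  from gen[OF p q] show ?thesis by simp
  qed
  moreover have "w > \<delta> \<Longrightarrow> \<bar>v\<bar> \<le> \<delta> \<Longrightarrow> ?thesis"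
  proof -
  assume w: "w > \<delta>" and v: "\<bar>v\<bar> \<le> \<delta>"
  have h: "huber \<delta> w = \<delta> * w - \<delta>^2 / 2" "cl \<delta> w = \<delta>" "huber \<delta> v = v^2/2" using huber_H[OF w d] huber_M[OF v] by auto
  have q: "2 * (huber \<delta> v - huber \<delta> w - (v - w) * cl \<delta> w) = (v-\<delta>)^2" unfolding h power2_eq_square by (simp add: field_simps)
  have p: "0 \<le> (v-\<delta>)^2" using w v d by simp
  from gen[OF p q] show ?thesis by simp
  qed
  moreover have "w > \<delta> \<Longrightarrow> v > \<delta> \<Longrightarrow> ?thesis"
  proof -
  assume w: "w > \<delta>" and v: "v > \<delta>"
  have h: "huber \<delta> w = \<delta> * w - \<delta>^2 / 2" "cl \<delta> w = \<delta>" "huber \<delta> v = \<delta> * v - \<delta>^2 / 2" using huber_H[OF w d] huber_H[OF v d] by auto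
  have q: "2 * (huber \<delta> v - huber \<delta> w - (v - w) * cl \<delta> w) = (0::real)" unfolding h power2_eq_square by (simp add: field_simps)
  have p: "0 \<le> (0::real)" using w v d by simp
  from gen[OF p q] show ?thesis by simp
  qed
  ultimately show ?thesis by linarith
qed

lemma huber_up: assumes d: "\<delta> > 0" shows "huber \<delta> v \<le> huber \<delta> w + (v - w) * cl \<delta> w + (v-w)^2/2"
proof -
  have gen: "\<And>X Y :: real. 0 \<le> Y \<Longrightarrow> 2*X = Y \<Longrightarrow> 0 \<le> X" by simp
  have "w < -\<delta> \<Longrightarrow> v < -\<delta> \<Longrightarrow> ?thesis"
  proof -
  assume w: "w < -\<delta>" and v: "v < -\<delta>"
  have h: "huber \<delta> w = - \<delta> * w - \<delta>^2 / 2" "cl \<delta> w = -\<delta>" "huber \<delta> v = - \<delta> * v - \<delta>^2 / 2" using huber_L[OF w d] huber_L[OF v d] by auto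
  have q: "2 * (huber \<delta> w + (v - w) * cl \<delta> w + (v-w)^2/2 - huber \<delta> v) = (v-w)^2" unfolding h power2_eq_square by (simp add: field_simps)
  have p: "0 \<le> (v-w)^2" using w v d by simp
  from gen[OF p q] show ?thesis by simp
  qed
  moreover have "w < -\<delta> \<Longrightarrow> \<bar>v\<bar> \<le> \<delta> \<Longrightarrow> ?thesis"
  proof -
  assume w: "w < -\<delta>" and v: "\<bar>v\<bar> \<le> \<delta>"
  have h: "huber \<delta> w = - \<delta> * w - \<delta>^2 / 2" "cl \<delta> w = -\<delta>" "huber \<delta> v = v^2/2" using huber_L[OF w d] huber_M[OF v] by auto
  have q: "2 * (huber \<delta> w + (v - w) * cl \<delta> w + (v-w)^2/2 - huber \<delta> v) = (-w-\<delta>)*(2 * v - w + \<delta>)" unfolding h power2_eq_square by (simp add: field_simps)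
  have p: "0 \<le> (-w-\<delta>)*(2 * v - w + \<delta>)" using w v d by (intro mult_nonneg_nonneg) auto
  from gen[OF p q] show ?thesis by simp
  qed
  moreover have "w < -\<delta> \<Longrightarrow> v > \<delta> \<Longrightarrow> ?thesis"
  proof -
  assume w: "w < -\<delta>" and v: "v > \<delta>"
  have h: "huber \<delta> w = - \<delta> * w - \<delta>^2 / 2" "cl \<delta> w = -\<delta>" "huber \<delta> v = \<delta> * v - \<delta>^2 / 2" using huber_L[OF w d] huber_H[OF v d] by auto
  have q: "2 * (huber \<delta> w + (v - w) * cl \<delta> w + (v-w)^2/2 - huber \<delta> v) = (-w-\<delta>)*(2 * v - w + \<delta>) + (v-\<delta>)^2" unfolding h power2_eq_square by (simp add: field_simps)
  have p: "0 \<le> (-w-\<delta>)*(2 * v - w + \<delta>) + (v-\<delta>)^2" using w v d by (intro add_nonneg_nonneg mult_nonneg_nonneg) auto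
  from gen[OF p q] show ?thesis by simp
  qed
  moreover have "\<bar>w\<bar> \<le> \<delta> \<Longrightarrow> v < -\<delta> \<Longrightarrow> ?thesis"
  proof -
  assume w: "\<bar>w\<bar> \<le> \<delta>" and v: "v < -\<delta>"
  have h: "huber \<delta> w = w^2/2" "cl \<delta> w = w" "huber \<delta> v = - \<delta> * v - \<delta>^2 / 2" using huber_M[OF w] huber_L[OF v d] by auto
  have q: "2 * (huber \<delta> w + (v - w) * cl \<delta> w + (v-w)^2/2 - huber \<delta> v) = (v+\<delta>)^2" unfolding h power2_eq_square by (simp add: field_simps)
  have p: "0 \<le> (v+\<delta>)^2" using w v d by simp
  from gen[OF p q] show ?thesis by simp
  qed
  moreover have "\<bar>w\<bar> \<le> \<delta> \<Longrightarrow> \<bar>v\<bar> \<le> \<delta> \<Longrightarrow> ?thesis"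
  proof -
  assume w: "\<bar>w\<bar> \<le> \<delta>" and v: "\<bar>v\<bar> \<le> \<delta>"
  have h: "huber \<delta> w = w^2/2" "cl \<delta> w = w" "huber \<delta> v = v^2/2" using huber_M[OF w] huber_M[OF v] by auto
  have q: "2 * (huber \<delta> w + (v - w) * cl \<delta> w + (v-w)^2/2 - huber \<delta> v) = (0::real)" unfolding h power2_eq_square by (simp add: field_simps)
  have p: "0 \<le> (0::real)" using w v d by simp
  from gen[OF p q] show ?thesis by simp
  qed
  moreover have "\<bar>w\<bar> \<le> \<delta> \<Longrightarrow> v > \<delta> \<Longrightarrow> ?thesis"
  proof -
  assume w: "\<bar>w\<bar> \<le> \<delta>" and v: "v > \<delta>"
  have h: "huber \<delta> w = w^2/2" "cl \<delta> w = w" "huber \<delta> v = \<delta> * v - \<delta>^2 / 2" using huber_M[OF w] huber_H[OF v d] by auto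
  have q: "2 * (huber \<delta> w + (v - w) * cl \<delta> w + (v-w)^2/2 - huber \<delta> v) = (v-\<delta>)^2" unfolding h power2_eq_square by (simp add: field_simps)
  have p: "0 \<le> (v-\<delta>)^2" using w v d by simp
  from gen[OF p q] show ?thesis by simp
  qed
  moreover have "w > \<delta> \<Longrightarrow> v < -\<delta> \<Longrightarrow> ?thesis"
  proof -
  assume w: "w > \<delta>" and v: "v < -\<delta>"
  have h: "huber \<delta> w = \<delta> * w - \<delta>^2 / 2" "cl \<delta> w = \<delta>" "huber \<delta> v = - \<delta> * v - \<delta>^2 / 2" using huber_H[OF w d] huber_L[OF v d] by auto
  have q: "2 * (huber \<delta> w + (v - w) * cl \<delta> w + (v-w)^2/2 - huber \<delta> v) = (w-\<delta>)*(w+\<delta>-2 * v) + (v+\<delta>)^2" unfolding h power2_eq_square by (simp add: field_simps)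
  have p: "0 \<le> (w-\<delta>)*(w+\<delta>-2 * v) + (v+\<delta>)^2" using w v d by (intro add_nonneg_nonneg mult_nonneg_nonneg) auto
  from gen[OF p q] show ?thesis by simp
  qed
  moreover have "w > \<delta> \<Longrightarrow> \<bar>v\<bar> \<le> \<delta> \<Longrightarrow> ?thesis"
  proof -
  assume w: "w > \<delta>" and v: "\<bar>v\<bar> \<le> \<delta>"
  have h: "huber \<delta> w = \<delta> * w - \<delta>^2 / 2" "cl \<delta> w = \<delta>" "huber \<delta> v = v^2/2" using huber_H[OF w d] huber_M[OF v] by auto
  have q: "2 * (huber \<delta> w + (v - w) * cl \<delta> w + (v-w)^2/2 - huber \<delta> v) = (w-\<delta>)*(w+\<delta>-2 * v)" unfolding h power2_eq_square by (simp add: field_simps)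
  have p: "0 \<le> (w-\<delta>)*(w+\<delta>-2 * v)" using w v d by (intro mult_nonneg_nonneg) auto
  from gen[OF p q] show ?thesis by simp
  qed
  moreover have "w > \<delta> \<Longrightarrow> v > \<delta> \<Longrightarrow> ?thesis"
  proof -
  assume w: "w > \<delta>" and v: "v > \<delta>"
  have h: "huber \<delta> w = \<delta> * w - \<delta>^2 / 2" "cl \<delta> w = \<delta>" "huber \<delta> v = \<delta> * v - \<delta>^2 / 2" using huber_H[OF w d] huber_H[OF v d] by auto
  have q: "2 * (huber \<delta> w + (v - w) * cl \<delta> w + (v-w)^2/2 - huber \<delta> v) = (v-w)^2" unfolding h power2_eq_square by (simp add: field_simps)
  have p: "0 \<le> (v-w)^2" using w v d by simp
  from gen[OF p q] show ?thesis by simp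
  qed
  ultimately show ?thesis by linarith
qed

definition c2 :: "real \<Rightarrow> real \<Rightarrow> real \<Rightarrow> real" where "c2 \<delta> s w = min (\<delta>+s) (max (-\<delta>) w)"

lemma c2_step: "\<delta> > 0 \<Longrightarrow> s > 0 \<Longrightarrow>
  s * indicator {-\<delta>..\<delta>} (w - s) \<le> c2 \<delta> s w - c2 \<delta> s (w - s)"
  by (auto simp: c2_def indicator_def)

lemma lemA: assumes "\<delta> > 0" "s > 0"
  shows "s * (\<Sum>i\<in>{1..j}. indicator {real i * s - \<delta> .. real i * s + \<delta>} v) \<le> c2 \<delta> s v - c2 \<delta> s (v - real j * s)"
proof (induction j)
  case 0 then show ?case by simp
next
  case (Suc j)
  have "s * indicator {-\<delta>..\<delta>} ((v - real j * s) - s) \<le> c2 \<delta> s (v - real j * s) - c2 \<delta> s ((v - real j * s) - s)"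
    by (rule c2_step[OF assms])
  moreover have "indicator {-\<delta>..\<delta>} ((v - real j * s) - s) = (indicator {real (Suc j) * s - \<delta> .. real (Suc j) * s + \<delta>} v :: real)"
    by (auto simp: indicator_def algebra_simps)
  moreover have "c2 \<delta> s (v - real (Suc j) * s) = c2 \<delta> s ((v - real j * s) - s)" by (simp add: algebra_simps)
  moreover have "(\<Sum>i\<in>{1..Suc j}. indicator {real i * s - \<delta> .. real i * s + \<delta>} v) = (\<Sum>i\<in>{1..j}. indicator {real i * s - \<delta> .. real i * s + \<delta>} v) + (indicator {real (Suc j) * s - \<delta> .. real (Suc j) * s + \<delta>} v :: real)"
    by simp
  ultimately show ?case using Suc by (simp only: distrib_left; linarith)
qed

lemma lemA': assumes "\<delta> > 0" "s > 0"
  shows "s * (\<Sum>i\<in>{1..j}. indicator {real i * s - \<delta> .. real i * s + \<delta>} v) - s \<le> cl \<delta> v - cl \<delta> (v - real j * s)"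
proof -
  have "\<And>w. 0 \<le> c2 \<delta> s w - cl \<delta> w \<and> c2 \<delta> s w - cl \<delta> w \<le> s" using assms by (auto simp: c2_def cl_def)
  from this[of v] this[of "v - real j * s"] lemA[OF assms, where j=j and v=v] show ?thesis by linarith
qed

definition psi :: "real \<Rightarrow> real \<Rightarrow> real \<Rightarrow> real" where
  "psi \<delta> v G = huber \<delta> (v - G) - huber \<delta> v + G * cl \<delta> v"

lemma lemB: assumes "\<delta> > 0" "s > 0"
  shows "s^2 * (\<Sum>j<n. \<Sum>i\<in>{1..j}. indicator {real i * s - \<delta> .. real i * s + \<delta>} v) - real n * s^2 \<le> psi \<delta> v (real n * s)"
proof (induction n)
  case 0 then show ?case by (simp add: psi_def)
next
  case (Suc n)
  have c: "huber \<delta> (v - real n * s) + ((v - real n * s - s) - (v - real n * s)) * cl \<delta> (v - real n * s) \<le> huber \<delta> (v - real n * s - s)"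
    by (rule huber_conv[OF assms(1)])
  have "psi \<delta> v (real (Suc n) * s) - psi \<delta> v (real n * s) = huber \<delta> (v - real n * s - s) - huber \<delta> (v - real n * s) + s * cl \<delta> v"
    by (simp add: psi_def algebra_simps)
  also have "\<dots> \<ge> s * (cl \<delta> v - cl \<delta> (v - real n * s))" using c by (simp add: algebra_simps)
  finally have d: "psi \<delta> v (real (Suc n) * s) - psi \<delta> v (real n * s) \<ge> s * (cl \<delta> v - cl \<delta> (v - real n * s))" .
  have e: "s * (s * (\<Sum>i\<in>{1..n}. indicator {real i * s - \<delta> .. real i * s + \<delta>} v) - s) \<le> s * (cl \<delta> v - cl \<delta> (v - real n * s))"
    using lemA'[OF assms, where j=n and v=v] assms by (intro mult_left_mono) auto
  show ?case using Suc d e by (simp add: power2_eq_square algebra_simps)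
qed
lemma huber_neg: "huber \<delta> (-t) = huber \<delta> t" by (simp add: huber_def)
lemma cl_neg: "\<delta> > 0 \<Longrightarrow> cl \<delta> (-t) = - cl \<delta> t" by (auto simp: cl_def max_def min_def)
lemma psi_neg: "\<delta> > 0 \<Longrightarrow> psi \<delta> (-v) (-G) = psi \<delta> v G"
  unfolding psi_def using huber_neg[of \<delta> "v - G"] by (simp add: cl_neg huber_neg)

lemma lemB': assumes d: "\<delta> > 0" and n: "n > 0"
  shows "(\<bar>G\<bar>/n)^2 * (\<Sum>j<n. \<Sum>i\<in>{1..j}. indicator {a + real i * G / n - \<delta> .. a + real i * G / n + \<delta>} y) - real n * (\<bar>G\<bar>/n)^2 \<le> psi \<delta> (y - a) G"
proof -
  consider "G > 0" | "G < 0" | "G = 0" by linarith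
  then show ?thesis
  proof cases
    case 1
    define s where "s = G / n"
    have s: "s > 0" using 1 n by (simp add: s_def)
    have ns: "real n * s = G" using n by (simp add: s_def)
    have ind: "\<And>i. indicator {real i * s - \<delta> .. real i * s + \<delta>} (y - a) = (indicator {a + real i * G / n - \<delta> .. a + real i * G / n + \<delta>} y :: real)"
      by (auto simp: indicator_def s_def algebra_simps)
    have "\<bar>G\<bar>/n = s" using 1 by (simp add: s_def)
    then show ?thesis using lemB[OF d s, where n=n and v="y-a"] by (simp add: ind ns)
  next
    case 2
    define s where "s = - G / n"
    have s: "s > 0" using 2 n unfolding s_def by (simp add: divide_neg_pos)
    have ns: "real n * s = - G" using n by (simp add: s_def)
    have ind: "\<And>i. indicator {real i * s - \<delta> .. real i * s + \<delta>} (a - y) = (indicator {a + real i * G / n - \<delta> .. a + real i * G / n + \<delta>} y :: real)"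
      by (auto simp: indicator_def s_def algebra_simps)
    have "\<bar>G\<bar>/n = s" using 2 by (simp add: s_def)
    moreover have "psi \<delta> (a - y) (- G) = psi \<delta> (y - a) G" using psi_neg[OF d, of "y - a" G] by simp
    ultimately show ?thesis using lemB[OF d s, where n=n and v="a-y"] by (simp add: ind ns)
  next
    case 3 then show ?thesis by (simp add: psi_def)
  qed
qed

lemma psi_nonneg: "\<delta> > 0 \<Longrightarrow> 0 \<le> psi \<delta> v G"
  using huber_conv[of \<delta> v "v - G"] by (simp add: psi_def algebra_simps)

lemma cl_bound: "\<delta> > 0 \<Longrightarrow> \<bar>cl \<delta> v\<bar> \<le> \<delta>" by (auto simp: cl_def)

lemma psi_bound: assumes d: "\<delta> > 0" shows "\<bar>psi \<delta> v G\<bar> \<le> 2 * \<delta> * \<bar>G\<bar>"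
proof -
  have a: "huber \<delta> (v - G) + G * cl \<delta> (v - G) \<le> huber \<delta> v" using huber_conv[OF d, of "v - G" v] by simp
  have b: "\<bar>G * cl \<delta> (v - G)\<bar> \<le> \<delta> * \<bar>G\<bar>" "\<bar>G * cl \<delta> v\<bar> \<le> \<delta> * \<bar>G\<bar>"
    using mult_left_mono[OF cl_bound[OF d, of "v-G"], of "\<bar>G\<bar>"] mult_left_mono[OF cl_bound[OF d, of "v"], of "\<bar>G\<bar>"]
    by (simp_all add: abs_mult mult.commute)
  show ?thesis using psi_nonneg[OF d, of v G] a b unfolding psi_def by (simp add: abs_le_iff; linarith)
qed

lemma psi_meas[measurable]: "(\<lambda>y. psi \<delta> (y - a) G) \<in> borel_measurable borel"
  unfolding psi_def huber_def cl_def by measurable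

lemma sum_j: "(\<Sum>j<n. real j) = real n * (real n - 1) / 2"
  by (induction n) (auto simp: algebra_simps)
lemma core_int:
  fixes M :: "real measure"
  assumes M: "prob_space M" and sM: "sets M = sets borel" and d: "\<delta> > 0"
  shows "integrable M (\<lambda>y. psi \<delta> (y - a) G)"
proof -
  interpret prob_space M by fact
  have meas: "(\<lambda>y. psi \<delta> (y - a) G) \<in> borel_measurable M"
    using psi_meas measurable_cong_sets[OF sM refl] by blast
  show ?thesis
  proof (rule Bochner_Integration.integrable_bound[where f="\<lambda>_. 2 * \<delta> * \<bar>G\<bar>"])
    show "integrable M (\<lambda>_. 2 * \<delta> * \<bar>G\<bar>)" by simp
    show "(\<lambda>y. psi \<delta> (y - a) G) \<in> borel_measurable M" by (rule meas)
    show "AE x in M. norm (psi \<delta> (x - a) G) \<le> norm (2 * \<delta> * \<bar>G\<bar>)"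
      using psi_bound[OF d] d by simp
  qed
qed

lemma arith_help: fixes Z Y N X I :: real
  shows "Z + Y < N*(X/2 - I) \<Longrightarrow> X*(N-1)/2 - Y \<le> N*I \<Longrightarrow> X \<le> Z \<Longrightarrow> 0 \<le> Z \<Longrightarrow> 0 \<le> Y \<Longrightarrow> False"
  by (simp add: algebra_simps)

lemma core:
  fixes M :: "real measure"
  assumes M: "prob_space M" and sM: "sets M = sets borel" and d: "\<delta> > 0"
    and HH: "\<And>c. \<bar>c\<bar> \<le> \<bar>G\<bar> \<Longrightarrow> \<alpha> \<le> measure M {a + c - \<delta> .. a + c + \<delta>}"
  shows "\<alpha>/2 * G^2 \<le> (\<integral>y. psi \<delta> (y - a) G \<partial>M)"
proof -
  interpret prob_space M by fact
  define I where "I = (\<integral>y. psi \<delta> (y - a) G \<partial>M)"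
  have sp: "space M = UNIV" using sets_eq_imp_space_eq[OF sM] by simp
  have setsA: "\<And>c. {a + c - \<delta> .. a + c + \<delta>} \<in> sets M" using sM by simp
  have bnd: "\<alpha> * G^2 * (real n - 1) / (2 * real n) - G^2 / real n \<le> I" if n: "n > 0" for n :: nat
  proof -
    define s where "s = \<bar>G\<bar> / real n"
    define A where "A = (\<lambda>i::nat. {a + real i * G / real n - \<delta> .. a + real i * G / real n + \<delta>})"
    define L where "L = (\<lambda>y. s^2 * (\<Sum>j<n. \<Sum>i\<in>{1..j}. indicator (A i) y) - real n * s^2 :: real)"
    have Lle: "L y \<le> psi \<delta> (y - a) G" for y
      unfolding L_def A_def s_def using lemB'[OF d n, of G a y] by simp
    have intA: "integrable M (indicator (A i) :: real \<Rightarrow> real)" for i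
      unfolding A_def by (rule integrable_real_indicator) (auto simp: setsA less_top[symmetric] emeasure_finite)
    have intL: "integrable M L" unfolding L_def using intA by auto
    have IL: "integral\<^sup>L M L = s^2 * (\<Sum>j<n. \<Sum>i\<in>{1..j}. measure M (A i)) - real n * s^2"
      unfolding L_def using intA prob_space sp by (simp add: integral_sum)
    have mA: "\<alpha> \<le> measure M (A i)" if "i < n" for i
    proof -
      have "\<bar>real i * G / real n\<bar> \<le> \<bar>G\<bar>" using that n
        by (simp add: abs_mult divide_le_eq mult.commute mult_left_mono)
      thus ?thesis unfolding A_def using HH by (simp add: add.assoc)
    qed
    have "(\<Sum>j<n. \<Sum>i\<in>{1..j}. \<alpha>) \<le> (\<Sum>j<n. \<Sum>i\<in>{1..j}. measure M (A i))"
      by (intro sum_mono) (auto intro!: mA)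
    moreover have "(\<Sum>j<n. \<Sum>i\<in>{1..j}. \<alpha>) = \<alpha> * (\<Sum>j<n. real j)" by (simp add: sum_distrib_left mult.commute)
    ultimately have "\<alpha> * (real n * (real n - 1) / 2) \<le> (\<Sum>j<n. \<Sum>i\<in>{1..j}. measure M (A i))"
      by (simp add: sum_j)
    hence "s^2 * (\<alpha> * (real n * (real n - 1) / 2)) - real n * s^2 \<le> integral\<^sup>L M L"
      unfolding IL by (intro diff_right_mono mult_left_mono) auto
    also have "integral\<^sup>L M L \<le> I" unfolding I_def
      by (rule integral_mono[OF intL core_int[OF M sM d]]) (rule Lle)
    finally have fin: "s^2 * (\<alpha> * (real n * (real n - 1) / 2)) - real n * s^2 \<le> I" .
    have sq: "s^2 = G^2 / (real n)^2" unfolding s_def by (simp add: power_divide)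
    have eq: "s^2 * (\<alpha> * (real n * (real n - 1) / 2)) - real n * s^2 = \<alpha> * G^2 * (real n - 1) / (2 * real n) - G^2 / real n"
      unfolding sq using n by (simp add: field_simps power2_eq_square)
    show ?thesis using fin eq by simp
  qed
  show ?thesis unfolding I_def[symmetric]
  proof (rule ccontr)
    assume "\<not> \<alpha> / 2 * G\<^sup>2 \<le> I"
    hence gap: "\<alpha> / 2 * G\<^sup>2 - I > 0" by simp
    obtain n :: nat where n: "real n > (\<bar>\<alpha>\<bar> * G^2 + G^2) / (\<alpha> / 2 * G\<^sup>2 - I)" using reals_Archimedean2 by blast
    have "0 \<le> (\<bar>\<alpha>\<bar> * G^2 + G^2) / (\<alpha> / 2 * G\<^sup>2 - I)" using gap by (intro divide_nonneg_pos) auto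
    hence npos: "n > 0" using n by linarith
    have nA: "(\<bar>\<alpha>\<bar> * G^2 + G^2) < real n * (\<alpha> / 2 * G\<^sup>2 - I)" using n gap by (simp add: divide_less_eq)
    moreover have "\<alpha> * G^2 * (real n - 1) / (2 * real n) - G^2 / real n \<le> I" using bnd[OF npos] .
    hence "real n * (\<alpha> * G^2 * (real n - 1) / (2 * real n) - G^2 / real n) \<le> real n * I" using npos by simp
    moreover have "real n * (\<alpha> * G^2 * (real n - 1) / (2 * real n) - G^2 / real n) = \<alpha> * G^2 * (real n - 1) / 2 - G^2"
      using npos by (simp add: field_simps)
    ultimately have "\<alpha> * G^2 * (real n - 1) / 2 - G^2 \<le> real n * I" by simp
    moreover have "\<alpha> * G^2 \<le> \<bar>\<alpha>\<bar> * G^2" by (rule mult_right_mono) auto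
    moreover have "0 \<le> \<bar>\<alpha>\<bar> * G^2" by simp
    moreover have "0 \<le> G^2" by simp
    moreover have nA': "\<bar>\<alpha>\<bar>*G^2 + G^2 < real n * (\<alpha>*G^2/2 - I)" using nA by simp
    ultimately show False using arith_help by blast
  qed
qed



lemma K_facts: assumes K: "K \<in> \<mu> \<rightarrow>\<^sub>M prob_algebra borel" and x: "x \<in> space \<mu>"
  shows "prob_space (K x)" "sets (K x) = sets borel"
  using measurable_space[OF K x] by (auto simp: space_prob_algebra)

lemma joint_facts:
  fixes \<mu> :: "'a measure"
  assumes mu: "prob_space \<mu>" and K: "K \<in> \<mu> \<rightarrow>\<^sub>M prob_algebra borel"
  shows "sets (joint_law \<mu> K) = sets (\<mu> \<Otimes>\<^sub>M borel)"
    and "prob_space (joint_law \<mu> K)"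
    and "\<And>F :: 'a \<times> real \<Rightarrow> ennreal. F \<in> borel_measurable (\<mu> \<Otimes>\<^sub>M borel) \<Longrightarrow>
          (\<integral>\<^sup>+z. F z \<partial>joint_law \<mu> K) = (\<integral>\<^sup>+x. \<integral>\<^sup>+y. F (x, y) \<partial>K x \<partial>\<mu>)"
proof -
  define N where "N = (\<lambda>x. distr (K x) (\<mu> \<Otimes>\<^sub>M borel) (\<lambda>y. (x, y)))"
  have JN: "joint_law \<mu> K = \<mu> \<bind> N" unfolding joint_law_def N_def ..
  have pairm: "(\<lambda>y. (x, y)) \<in> K x \<rightarrow>\<^sub>M \<mu> \<Otimes>\<^sub>M borel" if x: "x \<in> space \<mu>" for x
  proof -
    have "(\<lambda>y. (x, y)) \<in> borel \<rightarrow>\<^sub>M \<mu> \<Otimes>\<^sub>M borel" using x by measurable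
    thus ?thesis using measurable_cong_sets[OF K_facts(2)[OF K x] refl] by blast
  qed
  have Nm: "N \<in> \<mu> \<rightarrow>\<^sub>M subprob_algebra (\<mu> \<Otimes>\<^sub>M borel)"
    unfolding N_def
    by (rule measurable_distr2[where f="\<lambda>x y. (x, y)"]) (auto intro: measurable_prob_algebraD[OF K])
  have ne: "space \<mu> \<noteq> {}" using prob_space.not_empty[OF mu] .
  show "sets (joint_law \<mu> K) = sets (\<mu> \<Otimes>\<^sub>M borel)" unfolding JN
    by (rule sets_bind[OF _ ne]) (simp add: N_def)
  show "prob_space (joint_law \<mu> K)" unfolding JN
    by (rule prob_space.prob_space_bind[OF mu _ Nm])
       (auto simp: N_def intro!: prob_space.prob_space_distr K_facts[OF K] pairm)
  fix F :: "'a \<times> real \<Rightarrow> ennreal" assume F: "F \<in> borel_measurable (\<mu> \<Otimes>\<^sub>M borel)"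
  have "(\<integral>\<^sup>+z. F z \<partial>joint_law \<mu> K) = (\<integral>\<^sup>+x. \<integral>\<^sup>+z. F z \<partial>N x \<partial>\<mu>)"
    unfolding JN by (rule nn_integral_bind[OF F Nm])
  also have "\<dots> = (\<integral>\<^sup>+x. \<integral>\<^sup>+y. F (x, y) \<partial>K x \<partial>\<mu>)"
  proof (rule nn_integral_cong)
    fix x assume x: "x \<in> space \<mu>"
    have Fd: "F \<in> borel_measurable (distr (K x) (\<mu> \<Otimes>\<^sub>M borel) (\<lambda>y. (x, y)))"
      using F measurable_cong_sets[OF sets_distr refl] by blast
    show "(\<integral>\<^sup>+z. F z \<partial>N x) = (\<integral>\<^sup>+y. F (x, y) \<partial>K x)"
      unfolding N_def by (rule nn_integral_distr[OF pairm[OF x] Fd])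
  qed
  finally show "(\<integral>\<^sup>+z. F z \<partial>joint_law \<mu> K) = (\<integral>\<^sup>+x. \<integral>\<^sup>+y. F (x, y) \<partial>K x \<partial>\<mu>)" .
qed
lemma abs_powr2: "\<bar>a::real\<bar> powr 2 = a^2"
  by (cases "a = 0") (simp_all add: powr_numeral)

lemma limit_t: fixes a b c :: real
  assumes h: "\<And>t. 0 < t \<Longrightarrow> t \<le> 1 \<Longrightarrow> a \<le> b + t * c" and c: "0 \<le> c"
  shows "a \<le> b"
proof (rule ccontr)
  assume "\<not> a \<le> b"
  hence ab: "a - b > 0" by simp
  define t where "t = min 1 ((a - b) / (c + 1))"
  have t0: "0 < t" using ab c by (simp add: t_def)
  have t1: "t \<le> 1" by (simp add: t_def)
  have "t * c \<le> ((a - b) / (c + 1)) * c" using c by (intro mult_right_mono) (auto simp: t_def)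
  also have "\<dots> < a - b" using ab c by (simp add: divide_less_eq field_simps)
  finally show False using h[OF t0 t1] by simp
qed

lemma tail_arith:
  fixes C' \<epsilon> r N2 J :: real
  assumes C': "C' > 0" and eps: "\<epsilon> > 0" and r: "r > 0" and N0: "0 \<le> N2" and Nr: "N2 \<le> r"
    and J0: "0 \<le> J" and J: "J \<le> (C' * N2) powr (2 + \<epsilon>)"
  shows "((sqrt 2 * C') powr ((2 + \<epsilon>) / \<epsilon>) * r) powr (-\<epsilon>) * J \<le> N2^2/2"
proof -
  define p where "p = 2 + \<epsilon>"
  define A where "A = sqrt 2 * C'"
  define R where "R = A powr (p / \<epsilon>) * r"
  have A0: "A > 0" using C' by (simp add: A_def)
  have R0: "R > 0" using A0 r by (simp add: R_def)
  have Re: "R powr \<epsilon> = A powr p * r powr \<epsilon>"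
    unfolding R_def using A0 r eps by (simp add: powr_mult powr_powr)
  have sq2: "sqrt 2 powr p = 2 * 2 powr (\<epsilon> / 2)"
  proof -
    have "sqrt 2 powr p = (2 powr (1/2)) powr p" by (simp add: powr_half_sqrt)
    also have "\<dots> = 2 powr (1 + \<epsilon>/2)" by (simp add: powr_powr p_def field_simps)
    also have "\<dots> = 2 * 2 powr (\<epsilon> / 2)" by (simp add: powr_add)
    finally show ?thesis .
  qed
  have ge2: "2 \<le> sqrt 2 powr p" unfolding sq2 using eps by (simp add: ge_one_powr_ge_zero)
  have Ap: "A powr p = sqrt 2 powr p * C' powr p" unfolding A_def using C' by (simp add: powr_mult)
  have key: "J \<le> R powr \<epsilon> * N2^2 / 2"
  proof (cases "N2 = 0")
    case True
    then have "J \<le> 0" using J eps by (simp add: p_def)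
    thus ?thesis using True by simp
  next
    case False
    hence N: "N2 > 0" using N0 by simp
    have "J \<le> C' powr p * N2 powr p" using J C' N by (simp add: p_def powr_mult)
    also have "N2 powr p = N2^2 * N2 powr \<epsilon>" using N by (simp add: p_def powr_add powr_numeral)
    also have "N2 powr \<epsilon> \<le> r powr \<epsilon>" using N Nr eps by (intro powr_mono2) auto
    hence "C' powr p * (N2^2 * N2 powr \<epsilon>) \<le> C' powr p * (N2^2 * r powr \<epsilon>)"
      by (intro mult_left_mono) auto
    also have "C' powr p * (N2^2 * r powr \<epsilon>) \<le> (sqrt 2 powr p / 2) * C' powr p * r powr \<epsilon> * N2^2"
    proof -
      have "1 \<le> sqrt 2 powr p / 2" using ge2 by simp
      hence "1 * (C' powr p * r powr \<epsilon> * N2^2) \<le> (sqrt 2 powr p / 2) * (C' powr p * r powr \<epsilon> * N2^2)"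
        by (intro mult_right_mono) auto
      thus ?thesis by (simp add: algebra_simps)
    qed
    also have "\<dots> = R powr \<epsilon> * N2^2 / 2" unfolding Re Ap by (simp add: algebra_simps)
    finally show ?thesis .
  qed
  have "R powr (-\<epsilon>) * J \<le> R powr (-\<epsilon>) * (R powr \<epsilon> * N2^2 / 2)"
    using key by (intro mult_left_mono) auto
  also have "\<dots> = N2^2/2" using R0 by (simp add: powr_minus field_simps)
  finally show ?thesis unfolding R_def A_def p_def .
qed
lemma cdf_win: fixes M :: "real measure"
  assumes M: "prob_space M" and sM: "sets M = sets borel"
  shows "measure M {..z + \<delta>} - measure M {..z - \<delta>} \<le> measure M {z - \<delta> .. z + \<delta>}"
proof -
  interpret prob_space M by fact
  have "{..z + \<delta>} \<subseteq> {..z - \<delta>} \<union> {z - \<delta> .. z + \<delta>}" by auto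
  hence "measure M {..z + \<delta>} \<le> measure M ({..z - \<delta>} \<union> {z - \<delta> .. z + \<delta>})"
    using sM by (intro finite_measure_mono) auto
  also have "\<dots> \<le> measure M {..z - \<delta>} + measure M {z - \<delta> .. z + \<delta>}"
    using sM by (intro measure_Un_le) auto
  finally show ?thesis by simp
qed

lemma abs_le_1_sq: "\<bar>G::real\<bar> \<le> 1 + G^2"
proof -
  have "0 \<le> (\<bar>G\<bar> - 1)^2" by simp
  hence "2 * \<bar>G\<bar> \<le> 1 + \<bar>G\<bar>^2" by (simp add: power2_eq_square algebra_simps)
  thus ?thesis by simp
qed



theorem theorem7:
  fixes \<mu> :: "'x measure" and K :: "'x \<Rightarrow> real measure"
    and F :: "('x \<Rightarrow> real) set" and fstar :: "'x \<Rightarrow> real"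
    and \<delta> \<epsilon> C' \<alpha> r :: real
  assumes mu: "prob_space \<mu>"
    and K_meas: "K \<in> measurable \<mu> (prob_algebra borel)"
    and delta: "\<delta> > 0"
    and eps: "\<epsilon> > 0"
    and F_meas: "\<forall>f\<in>F. f \<in> borel_measurable \<mu>"
    and F_convex: "convex_class F"
    and loss_int: "\<forall>f\<in>F. integrable (joint_law \<mu> K) (huber_loss \<delta> f)"
    and fstar_in: "fstar \<in> F"
    and fstar_min: "\<forall>f\<in>F. (\<integral>z. huber_loss \<delta> fstar z \<partial>joint_law \<mu> K)
                            \<le> (\<integral>z. huber_loss \<delta> f z \<partial>joint_law \<mu> K)"
    and C'_pos: "C' > 0"
    and NormEq: "\<forall>f\<in>F. memLp \<mu> 2 (\<lambda>x. f x - fstar x) \<longrightarrow>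
                   memLp \<mu> (2 + \<epsilon>) (\<lambda>x. f x - fstar x) \<and>
                   Lnorm \<mu> (2 + \<epsilon>) (\<lambda>x. f x - fstar x) \<le> C' * Lnorm \<mu> 2 (\<lambda>x. f x - fstar x)"
    and alpha: "\<alpha> > 0" and r: "r > 0"
    and H: "\<forall>x z. \<bar>z - fstar x\<bar> \<le> (sqrt 2 * C') powr ((2 + \<epsilon>) / \<epsilon>) * r \<longrightarrow>
                 cond_cdf K x (z + \<delta>) - cond_cdf K x (z - \<delta>) \<ge> \<alpha>"
    and f_in: "f \<in> F"
    and f_L2: "memLp \<mu> 2 (\<lambda>x. f x - fstar x)"
    and f_close: "Lnorm \<mu> 2 (\<lambda>x. f x - fstar x) \<le> r"
  shows "(Lnorm \<mu> 2 (\<lambda>x. f x - fstar x))\<^sup>2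
           \<le> 4 / \<alpha> * (\<integral>z. huber_loss \<delta> f z - huber_loss \<delta> fstar z \<partial>joint_law \<mu> K)"
proof -
  interpret mu: prob_space \<mu> by (rule mu)
  define g where "g = (\<lambda>x. f x - fstar x)"
  define P where "P = joint_law \<mu> K"
  define R where "R = (sqrt 2 * C') powr ((2 + \<epsilon>) / \<epsilon>) * r"
  define N2 where "N2 = Lnorm \<mu> 2 g"
  define p where "p = 2 + \<epsilon>"
  have sP: "sets P = sets (\<mu> \<Otimes>\<^sub>M borel)" and probP: "prob_space P"
    and nnP: "\<And>F. F \<in> borel_measurable (\<mu> \<Otimes>\<^sub>M borel) \<Longrightarrow>
          (\<integral>\<^sup>+z. F z \<partial>P) = (\<integral>\<^sup>+x. \<integral>\<^sup>+y. F (x, y) \<partial>K x \<partial>\<mu>)"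
    using joint_facts[OF mu K_meas] unfolding P_def by auto
  interpret P: prob_space P by (rule probP)
  have mP: "\<And>F. F \<in> borel_measurable (\<mu> \<Otimes>\<^sub>M borel) \<Longrightarrow> F \<in> borel_measurable P"
    using measurable_cong_sets[OF sP refl] by blast
  have fm[measurable]: "f \<in> borel_measurable \<mu>" and fsm[measurable]: "fstar \<in> borel_measurable \<mu>"
    using F_meas f_in fstar_in by auto
  have gm[measurable]: "g \<in> borel_measurable \<mu>" unfolding g_def by measurable
  have R0: "R > 0" unfolding R_def using C'_pos r by simp
  have d: "\<delta> > 0" by (rule delta)

  have g2int: "integrable \<mu> (\<lambda>x. (g x)^2)"
    using f_L2 unfolding memLp_def g_def[symmetric] by (simp add: abs_powr2)
  define S where "S = (\<integral>x. (g x)^2 \<partial>\<mu>)"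
  have S0: "0 \<le> S" unfolding S_def by simp
  have N2S: "N2 = S powr (1/2)" unfolding N2_def Lnorm_def S_def by (simp add: abs_powr2)
  have N20: "0 \<le> N2" unfolding N2S by simp
  have N2sq: "N2^2 = S" unfolding N2S using S0 by (simp add: powr_half_sqrt)
  have N2r: "N2 \<le> r" using f_close unfolding N2_def g_def .

  have NE: "memLp \<mu> (2 + \<epsilon>) g \<and> Lnorm \<mu> (2 + \<epsilon>) g \<le> C' * N2"
    using NormEq f_in f_L2 unfolding g_def N2_def by blast
  define J where "J = (\<integral>x. \<bar>g x\<bar> powr p \<partial>\<mu>)"
  have Jint: "integrable \<mu> (\<lambda>x. \<bar>g x\<bar> powr p)" using NE unfolding memLp_def p_def by simp
  have J0: "0 \<le> J" unfolding J_def by simp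
  have JL: "J = (Lnorm \<mu> p g) powr p"
    unfolding Lnorm_def J_def[symmetric] using J0 eps by (simp add: powr_powr p_def)
  have J_le: "J \<le> (C' * N2) powr (2 + \<epsilon>)"
  proof -
    have "Lnorm \<mu> p g \<ge> 0" unfolding Lnorm_def by simp
    hence "(Lnorm \<mu> p g) powr p \<le> (C' * N2) powr p" using NE eps unfolding p_def
      by (intro powr_mono2) auto
    thus ?thesis using JL p_def by simp
  qed
  have tailA: "R powr (-\<epsilon>) * J \<le> N2^2/2"
    unfolding R_def by (rule tail_arith[OF C'_pos eps r N20 N2r J0 J_le])
  define tl where "tl = (\<lambda>x. if \<bar>g x\<bar> \<le> R then 0 else (g x)^2)"
  have tlm: "tl \<in> borel_measurable \<mu>" unfolding tl_def by measurable
  have tlint: "integrable \<mu> tl"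
    by (rule Bochner_Integration.integrable_bound[OF g2int tlm]) (auto simp: tl_def)
  have tl_le: "tl x \<le> R powr (-\<epsilon>) * \<bar>g x\<bar> powr p" for x
  proof (cases "\<bar>g x\<bar> \<le> R")
    case True then show ?thesis by (simp add: tl_def)
  next
    case False
    hence gR: "\<bar>g x\<bar> > R" by simp
    have "R powr \<epsilon> \<le> \<bar>g x\<bar> powr \<epsilon>" using gR R0 eps by (intro powr_mono2) auto
    hence "(g x)^2 * R powr \<epsilon> \<le> (g x)^2 * \<bar>g x\<bar> powr \<epsilon>" by (intro mult_left_mono) auto
    also have "\<dots> = \<bar>g x\<bar> powr p" using gR R0
      by (simp add: p_def powr_add abs_powr2)
    finally have "(g x)^2 * R powr \<epsilon> \<le> \<bar>g x\<bar> powr p" .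
    hence "(g x)^2 \<le> \<bar>g x\<bar> powr p / R powr \<epsilon>" using R0 by (simp add: le_divide_eq)
    thus ?thesis using False R0 by (simp add: tl_def powr_minus divide_inverse mult.commute)
  qed
  have T_le: "(\<integral>x. tl x \<partial>\<mu>) \<le> N2^2/2"
  proof -
    have "(\<integral>x. tl x \<partial>\<mu>) \<le> (\<integral>x. R powr (-\<epsilon>) * \<bar>g x\<bar> powr p \<partial>\<mu>)"
      using tlint Jint by (intro integral_mono) (auto intro: tl_le)
    also have "\<dots> = R powr (-\<epsilon>) * J" unfolding J_def by simp
    finally show ?thesis using tailA by simp
  qed
  define h where "h = (\<lambda>x. \<alpha>/2 * ((g x)^2 - tl x))"
  have hint: "integrable \<mu> h" unfolding h_def using g2int tlint by auto
  have h_eq: "h x = (if \<bar>g x\<bar> \<le> R then \<alpha>/2 * (g x)^2 else 0)" for x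
    by (simp add: h_def tl_def)
  have step3: "\<alpha>/4 * N2^2 \<le> (\<integral>x. h x \<partial>\<mu>)"
  proof -
    have e1: "(\<integral>x. h x \<partial>\<mu>) = \<alpha>/2 * (S - (\<integral>x. tl x \<partial>\<mu>))"
      unfolding h_def S_def using g2int tlint by simp
    have e2: "S - (\<integral>x. tl x \<partial>\<mu>) \<ge> N2^2/2" using T_le N2sq by simp
    have e3: "\<alpha>/2 * (N2^2/2) \<le> \<alpha>/2 * (S - (\<integral>x. tl x \<partial>\<mu>))"
      using e2 alpha by (intro mult_left_mono) auto
    show ?thesis using e1 e3 by linarith
  qed

  define Psi where "Psi = (\<lambda>z. psi \<delta> (snd z - fstar (fst z)) (g (fst z)))"
  have Psi_m: "Psi \<in> borel_measurable (\<mu> \<Otimes>\<^sub>M borel)"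
    unfolding Psi_def psi_def huber_def cl_def by measurable
  have hl: "\<And>f' z. huber_loss \<delta> f' z = huber \<delta> (snd z - f' (fst z))"
    by (simp add: huber_loss_def split_beta)
  define gc where "gc = (\<lambda>z. g (fst z) * cl \<delta> (snd z - fstar (fst z)))"
  have gc_m: "gc \<in> borel_measurable (\<mu> \<Otimes>\<^sub>M borel)" unfolding gc_def cl_def by measurable
  have Psi_eq: "Psi z = huber_loss \<delta> f z - huber_loss \<delta> fstar z + gc z" for z
    unfolding Psi_def psi_def gc_def hl g_def by simp
  have g2P_m: "(\<lambda>z. (g (fst z))^2) \<in> borel_measurable (\<mu> \<Otimes>\<^sub>M borel)" by measurable
  have g2P_nn: "(\<integral>\<^sup>+z. ennreal ((g (fst z))^2) \<partial>P) = ennreal S"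
  proof -
    have "(\<integral>\<^sup>+z. ennreal ((g (fst z))^2) \<partial>P) = (\<integral>\<^sup>+x. \<integral>\<^sup>+y. ennreal ((g x)^2) \<partial>K x \<partial>\<mu>)"
      by (subst nnP) (auto intro: g2P_m)
    also have "\<dots> = (\<integral>\<^sup>+x. ennreal ((g x)^2) \<partial>\<mu>)"
    proof (rule nn_integral_cong)
      fix x assume x: "x \<in> space \<mu>"
      interpret Kx: prob_space "K x" using K_facts[OF K_meas x] by simp
      show "(\<integral>\<^sup>+y. ennreal ((g x)^2) \<partial>K x) = ennreal ((g x)^2)" by (simp add: Kx.emeasure_space_1)
    qed
    also have "\<dots> = ennreal S" unfolding S_def by (rule nn_integral_eq_integral[OF g2int]) simp
    finally show ?thesis .
  qed
  have g2P: "integrable P (\<lambda>z. (g (fst z))^2)"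
    by (rule integrableI_nn_integral_finite[OF mP[OF g2P_m] _ g2P_nn]) simp
  have gcP: "integrable P gc"
  proof (rule Bochner_Integration.integrable_bound[where f="\<lambda>z. \<delta> * (1 + (g (fst z))^2)"])
    show "integrable P (\<lambda>z. \<delta> * (1 + (g (fst z))^2))" using g2P by auto
    show "gc \<in> borel_measurable P" by (rule mP[OF gc_m])
    show "AE z in P. norm (gc z) \<le> norm (\<delta> * (1 + (g (fst z))^2))"
    proof (rule AE_I2)
      fix z
      have "\<bar>gc z\<bar> \<le> \<bar>g (fst z)\<bar> * \<delta>" unfolding gc_def abs_mult
        using cl_bound[OF d] by (intro mult_left_mono) auto
      also have "\<dots> \<le> (1 + (g (fst z))^2) * \<delta>" using abs_le_1_sq d by (intro mult_right_mono) auto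
      finally show "norm (gc z) \<le> norm (\<delta> * (1 + (g (fst z))^2))" using d by (simp add: mult.commute)
    qed
  qed
  have LfP: "integrable P (huber_loss \<delta> f)" and LsP: "integrable P (huber_loss \<delta> fstar)"
    using loss_int f_in fstar_in unfolding P_def by auto
  have PsiP: "integrable P Psi" unfolding Psi_eq[abs_def] using LfP LsP gcP by auto
  define IL where "IL = (\<integral>z. huber_loss \<delta> f z - huber_loss \<delta> fstar z \<partial>P)"
  define IP where "IP = (\<integral>z. Psi z \<partial>P)"
  define Q where "Q = (\<integral>z. (g (fst z))^2 \<partial>P)"
  have Q0: "0 \<le> Q" unfolding Q_def by simp

  have step1: "IP \<le> IL"
  proof (rule limit_t[where c="Q/2"])
    fix t :: real assume t0: "0 < t" and t1: "t \<le> 1"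
    define ft where "ft = (\<lambda>x. t * f x + (1 - t) * fstar x)"
    have ftF: "ft \<in> F" using F_convex f_in fstar_in t0 t1 unfolding convex_class_def ft_def by auto
    have LtP: "integrable P (huber_loss \<delta> ft)" using loss_int ftF unfolding P_def by auto
    have opt: "(\<integral>z. huber_loss \<delta> fstar z \<partial>P) \<le> (\<integral>z. huber_loss \<delta> ft z \<partial>P)"
      using fstar_min ftF unfolding P_def by auto
    have pw: "Psi z \<le> (huber_loss \<delta> f z - huber_loss \<delta> fstar z) - (huber_loss \<delta> ft z - huber_loss \<delta> fstar z) / t + t / 2 * (g (fst z))^2" for z
    proof -
      define u where "u = snd z - fstar (fst z)"
      define G where "G = g (fst z)"
      have eft: "huber_loss \<delta> ft z = huber \<delta> (u - t * G)"
        unfolding hl ft_def u_def G_def g_def by (simp add: algebra_simps)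
      have up: "huber \<delta> (u - t * G) \<le> huber \<delta> u + (- (t * G)) * cl \<delta> u + (t * G)^2/2"
        using huber_up[OF d, of "u - t * G" u] by simp
      have "(huber \<delta> (u - t * G) - huber \<delta> u) / t \<le> (- (t * G) * cl \<delta> u + (t * G)^2/2) / t"
        using up t0 by (intro divide_right_mono) auto
      also have "\<dots> = - G * cl \<delta> u + t / 2 * G^2" using t0 by (simp add: field_simps power2_eq_square)
      finally have a: "(huber \<delta> (u - t * G) - huber \<delta> u) / t \<le> - G * cl \<delta> u + t / 2 * G^2" .
      have b: "huber_loss \<delta> fstar z = huber \<delta> u" unfolding hl u_def ..
      have c: "gc z = G * cl \<delta> u" unfolding gc_def G_def u_def ..
      show ?thesis unfolding Psi_eq eft b c using a unfolding G_def by simp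
    qed
    have "IP \<le> (\<integral>z. (huber_loss \<delta> f z - huber_loss \<delta> fstar z) - (huber_loss \<delta> ft z - huber_loss \<delta> fstar z) / t + t / 2 * (g (fst z))^2 \<partial>P)"
      unfolding IP_def using PsiP LfP LsP LtP g2P by (intro integral_mono pw) auto
    also have "\<dots> = IL - ((\<integral>z. huber_loss \<delta> ft z \<partial>P) - (\<integral>z. huber_loss \<delta> fstar z \<partial>P)) / t + t / 2 * Q"
      unfolding IL_def Q_def using LfP LsP LtP g2P by simp
    also have "\<dots> \<le> IL + t * (Q / 2)" using opt t0 by (simp add: field_simps)
    finally show "IP \<le> IL + t * (Q / 2)" .
  qed (use Q0 in simp)

  have Psi_nn: "\<And>z. 0 \<le> Psi z" unfolding Psi_def using psi_nonneg[OF d] by simp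
  have IP0: "0 \<le> IP" unfolding IP_def using Psi_nn by simp
  have h0: "\<And>x. 0 \<le> h x" unfolding h_eq using alpha by simp
  have step2: "(\<integral>x. h x \<partial>\<mu>) \<le> IP"
  proof -
    have pt: "ennreal (h x) \<le> (\<integral>\<^sup>+y. ennreal (Psi (x, y)) \<partial>K x)" if x: "x \<in> space \<mu>" for x
    proof -
      have Kp: "prob_space (K x)" and Ks: "sets (K x) = sets borel" using K_facts[OF K_meas x] by auto
      have PsiK: "(\<lambda>y. Psi (x, y)) = (\<lambda>y. psi \<delta> (y - fstar x) (g x))" unfolding Psi_def by simp
      have intK: "integrable (K x) (\<lambda>y. psi \<delta> (y - fstar x) (g x))" by (rule core_int[OF Kp Ks d])
      have eqK: "(\<integral>\<^sup>+y. ennreal (Psi (x, y)) \<partial>K x) = ennreal (\<integral>y. psi \<delta> (y - fstar x) (g x) \<partial>K x)"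
        using nn_integral_eq_integral[OF intK] psi_nonneg[OF d] by (simp add: Psi_def)
      have le: "h x \<le> (\<integral>y. psi \<delta> (y - fstar x) (g x) \<partial>K x)"
      proof (cases "\<bar>g x\<bar> \<le> R")
        case True
        have HH: "\<alpha> \<le> measure (K x) {fstar x + c - \<delta> .. fstar x + c + \<delta>}" if c: "\<bar>c\<bar> \<le> \<bar>g x\<bar>" for c
        proof -
          have "\<bar>(fstar x + c) - fstar x\<bar> \<le> R" using c True by simp
          hence "\<alpha> \<le> cond_cdf K x (fstar x + c + \<delta>) - cond_cdf K x (fstar x + c - \<delta>)"
            using H unfolding R_def by blast
          also have "\<dots> \<le> measure (K x) {fstar x + c - \<delta> .. fstar x + c + \<delta>}"
            unfolding cond_cdf_def by (rule cdf_win[OF Kp Ks])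
          finally show ?thesis .
        qed
        show ?thesis unfolding h_eq using True core[OF Kp Ks d HH] by simp
      next
        case False
        thus ?thesis unfolding h_eq using psi_nonneg[OF d] by simp
      qed
      show ?thesis unfolding eqK using le by (rule ennreal_leI)
    qed
    have "ennreal (\<integral>x. h x \<partial>\<mu>) = (\<integral>\<^sup>+x. ennreal (h x) \<partial>\<mu>)"
      by (rule nn_integral_eq_integral[OF hint, symmetric]) (simp add: h0)
    also have "\<dots> \<le> (\<integral>\<^sup>+x. \<integral>\<^sup>+y. ennreal (Psi (x, y)) \<partial>K x \<partial>\<mu>)"
      by (rule nn_integral_mono) (rule pt)
    also have "\<dots> = (\<integral>\<^sup>+z. ennreal (Psi z) \<partial>P)"
      by (rule nnP[symmetric]) (use Psi_m in measurable)
    also have "\<dots> = ennreal IP" unfolding IP_def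
      by (rule nn_integral_eq_integral[OF PsiP]) (simp add: Psi_nn)
    finally show ?thesis using IP0 by (simp add: ennreal_le_iff)
  qed
  have "\<alpha>/4 * N2^2 \<le> IL" using step3 step2 step1 by linarith
  hence "N2^2 \<le> 4/\<alpha> * IL" using alpha by (simp add: field_simps)
  thus ?thesis unfolding N2_def g_def IL_def P_def .
qed


end
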